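(* Let $A$ be a normal uniform Kan complex, $\pi:B\to A^{\mathrm{I}}$ a normal uniform Kan fibration, and $b:A\to B$ a map with $\pi\circ b=r$, where $r:A\to A^{\mathrm{I}}$ is the constant-path map. Then there is a map $j:A^{\mathrm{I}}\to B$ with $\pi\circ j=1_{A^{\mathrm{I}}}$ and $j\circ r=b$.
   Context: Let $\mathbb{B}$ be the category of finite sets $[n]=\{\bot,x_1,\dots,x_n,\top\}$ ($n\ge0$, $\bot\ne\top$) and functions preserving $\bot,\top$; cartesian cubical sets are presheaves on $\mathbb{B}^{op}$. $\mathrm{I}^n$ is the representable on $[n]$, $\mathrm{I}^n\cong\mathrm{I}\times\dots\times\mathrm{I}$, $\mathrm{I}=\mathrm{I}^1$, $\mathrm{I}^0=1$; the two maps $[1]\to[0]$ give endpoints $0,1:1\to\mathrm{I}$. $A^{\mathrm{I}}$ is the exponential and $r:A\to A^{\mathrm{I}}$ is induced by $\mathrm{I}\to1$. For $1\le i\le n$, $d\in\{0,1\}$, the face $\alpha_i^d:\mathrm{I}^{n-1}\to\mathrm{I}^n$ inserts $d$ in coordinate $i$; for $e\in\{0,1\}$ the open box $\sqcup^n_e\rightarrowtail\mathrm{I}^n$ is the union of the images of all faces $\alpha_i^d$ with $(i,d)\ne(1,e)$, with inclusion $i^n_e$. A uniform Kan fibration structure on $f:Y\to X$: for each $n\ge1$, $e\in\{0,1\}$, $k\ge1$ and commutative square $b':\mathrm{I}^k\times\sqcup^n_e\to Y$, $a:\mathrm{I}^k\times\mathrm{I}^n\to X$ with $fb'=a(1\times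 i^n_e)$, a chosen filler $\phi(a,b')$ ($\phi(a,b')(1\times i^n_e)=b'$, $f\phi(a,b')=a$), with $\phi(a,b')(\alpha\times1)=\phi(a(\alpha\times1),b'(\alpha\times1))$ for all $\alpha:\mathrm{I}^j\to\mathrm{I}^k$ ($j\ge1$). It is normal if for all $n\ge0$, $e$, $k\ge1$ and $c:\mathrm{I}^k\times\mathrm{I}^n\to Y$, with $\pi_n:\mathrm{I}^{n+1}\to\mathrm{I}^n$ forgetting the first coordinate, $\phi(fc(1\times\pi_n),c(1\times\pi_n)(1\times i^{n+1}_e))=c(1\times\pi_n)$. A normal uniform Kan complex is a cubical set $A$ with a normal uniform Kan fibration structure on $A\to1$. *)

theory Defs
  imports Main
begin

text \<open>The object [n] = {bot, x_1, ..., x_n, top} is encoded as {0..n+1}, with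
  bot = 0, x_i = i, top = n+1.  A morphism [n] -> [m] is a function preserving
  bot and top; values outside {0..n+1} are normalised to 0.\<close>

type_synonym bmap = "nat \<Rightarrow> nat"

definition bmor :: "nat \<Rightarrow> nat \<Rightarrow> bmap \<Rightarrow> bool" where
  "bmor n m f \<longleftrightarrow> f 0 = 0 \<and> f (Suc n) = Suc m \<and> (\<forall>i\<in>{1..n}. f i \<le> Suc m)
     \<and> (\<forall>i>Suc n. f i = 0)"

text \<open>bcomp n f g is the composite g o f of f : [n] -> [m] and g : [m] -> [p].\<close>
definition bcomp :: "nat \<Rightarrow> bmap \<Rightarrow> bmap \<Rightarrow> bmap" where
  "bcomp n f g = (\<lambda>i. if i \<le> Suc n then g (f i) else 0)"

definition bid :: "nat \<Rightarrow> bmap" where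
  "bid n = (\<lambda>i. if i \<le> Suc n then i else 0)"

text \<open>The endpoint d of [m]: False = 0 = bot, True = 1 = top.\<close>
definition ep :: "nat \<Rightarrow> bool \<Rightarrow> nat" where
  "ep m d = (if d then Suc m else 0)"

record 'a cset =
  cells :: "nat \<Rightarrow> 'a set"
  act :: "nat \<Rightarrow> nat \<Rightarrow> bmap \<Rightarrow> 'a \<Rightarrow> 'a"   (* act X n m f : X[n] -> X[m] for f : [n] -> [m] *)

definition cubical :: "'a cset \<Rightarrow> bool" where
  "cubical X \<longleftrightarrow>
     (\<forall>n m f x. bmor n m f \<longrightarrow> x \<in> cells X n \<longrightarrow> act X n m f x \<in> cells X m) \<and>
     (\<forall>n x. x \<in> cells X n \<longrightarrow> act X n n (bid n) x = x) \<and>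
     (\<forall>n m p f g x. bmor n m f \<longrightarrow> bmor m p g \<longrightarrow> x \<in> cells X n \<longrightarrow>
        act X n p (bcomp n f g) x = act X m p g (act X n m f x))"

text \<open>Maps of cubical sets: natural transformations, extensional (undefined off the cells).\<close>
definition nat_trans :: "'a cset \<Rightarrow> 'b cset \<Rightarrow> (nat \<Rightarrow> 'a \<Rightarrow> 'b) \<Rightarrow> bool" where
  "nat_trans X Y \<eta> \<longleftrightarrow>
     (\<forall>m x. x \<in> cells X m \<longrightarrow> \<eta> m x \<in> cells Y m) \<and>
     (\<forall>n m f x. bmor n m f \<longrightarrow> x \<in> cells X n \<longrightarrow> \<eta> m (act X n m f x) = act Y n m f (\<eta> n x)) \<and>
     (\<forall>m x. x \<notin> cells X m \<longrightarrow> \<eta> m x = undefined)"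

definition ncomp :: "'a cset \<Rightarrow> (nat \<Rightarrow> 'b \<Rightarrow> 'c) \<Rightarrow> (nat \<Rightarrow> 'a \<Rightarrow> 'b) \<Rightarrow> (nat \<Rightarrow> 'a \<Rightarrow> 'c)" where
  "ncomp X \<eta> \<theta> = (\<lambda>m x. if x \<in> cells X m then \<eta> m (\<theta> m x) else undefined)"

definition nid :: "'a cset \<Rightarrow> (nat \<Rightarrow> 'a \<Rightarrow> 'a)" where
  "nid X = (\<lambda>m x. if x \<in> cells X m then x else undefined)"

definition nrestr :: "'a cset \<Rightarrow> (nat \<Rightarrow> 'a \<Rightarrow> 'b) \<Rightarrow> (nat \<Rightarrow> 'a \<Rightarrow> 'b)" where
  "nrestr S \<eta> = (\<lambda>m x. if x \<in> cells S m then \<eta> m x else undefined)"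

text \<open>Representable I^n = y[n]: its m-cells are the B-maps [n] -> [m].\<close>
definition yon :: "nat \<Rightarrow> bmap cset" where
  "yon n = \<lparr> cells = (\<lambda>m. {g. bmor n m g}), act = (\<lambda>p q f g. bcomp n g f) \<rparr>"

definition cprod :: "'a cset \<Rightarrow> 'b cset \<Rightarrow> ('a \<times> 'b) cset" where
  "cprod X Y = \<lparr> cells = (\<lambda>m. cells X m \<times> cells Y m),
                 act = (\<lambda>n m f z. (act X n m f (fst z), act Y n m f (snd z))) \<rparr>"

definition terminal :: "unit cset" where
  "terminal = \<lparr> cells = (\<lambda>m. UNIV), act = (\<lambda>n m f x. x) \<rparr>"

definition to_terminal :: "'a cset \<Rightarrow> (nat \<Rightarrow> 'a \<Rightarrow> unit)" where
  "to_terminal X = (\<lambda>m x. if x \<in> cells X m then () else undefined)"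

text \<open>The face alpha_i^d : I^(n-1) -> I^n corresponds (Yoneda) to the B-map
  face n i d : [n] -> [n-1] sending x_i to the endpoint d and the other
  generators in order; on cells it is precomposition with it.\<close>
definition face :: "nat \<Rightarrow> nat \<Rightarrow> bool \<Rightarrow> bmap" where
  "face n i d = (\<lambda>j. if j = 0 then 0 else if j < i then j else if j = i then ep (n - 1) d
                     else if j \<le> Suc n then j - 1 else 0)"

text \<open>The open box: union of the images of all faces alpha_i^d with (i,d) /= (1,e).\<close>
definition obox :: "nat \<Rightarrow> bool \<Rightarrow> bmap cset" where
  "obox n e = \<lparr> cells = (\<lambda>m. {h. \<exists>i d. 1 \<le> i \<and> i \<le> n \<and> (i, d) \<noteq> (1, e) \<and>
                        h \<in> (\<lambda>g. bcomp n (face n i d) g) ` {g. bmor (n - 1) m g}}),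
                act = (\<lambda>p q f g. bcomp n g f) \<rparr>"

definition cube :: "nat \<Rightarrow> nat \<Rightarrow> (bmap \<times> bmap) cset" where
  "cube k n = cprod (yon k) (yon n)"

definition boxk :: "nat \<Rightarrow> nat \<Rightarrow> bool \<Rightarrow> (bmap \<times> bmap) cset" where
  "boxk k n e = cprod (yon k) (obox n e)"

definition times1 :: "(nat \<Rightarrow> bmap \<Rightarrow> bmap) \<Rightarrow> (nat \<Rightarrow> bmap \<times> bmap \<Rightarrow> bmap \<times> bmap)" where
  "times1 \<alpha> = (\<lambda>p z. (\<alpha> p (fst z), snd z))"

text \<open>pi_n : I^(n+1) -> I^n forgetting the first coordinate corresponds to the
  B-map shift n : [n] -> [n+1], x_j |-> x_(j+1).\<close>
definition shift :: "nat \<Rightarrow> bmap" where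
  "shift n = (\<lambda>j. if j = 0 then 0 else if j \<le> Suc n then Suc j else 0)"

definition one_times_pi :: "nat \<Rightarrow> (nat \<Rightarrow> bmap \<times> bmap \<Rightarrow> bmap \<times> bmap)" where
  "one_times_pi n = (\<lambda>p z. (fst z, bcomp n (shift n) (snd z)))"

type_synonym ('x, 'y) filler_op =
  "nat \<Rightarrow> bool \<Rightarrow> nat \<Rightarrow> (nat \<Rightarrow> bmap \<times> bmap \<Rightarrow> 'x) \<Rightarrow> (nat \<Rightarrow> bmap \<times> bmap \<Rightarrow> 'y)
     \<Rightarrow> (nat \<Rightarrow> bmap \<times> bmap \<Rightarrow> 'y)"

definition kan_square :: "'y cset \<Rightarrow> 'x cset \<Rightarrow> (nat \<Rightarrow> 'y \<Rightarrow> 'x) \<Rightarrow> nat \<Rightarrow> bool \<Rightarrow> nat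
    \<Rightarrow> (nat \<Rightarrow> bmap \<times> bmap \<Rightarrow> 'x) \<Rightarrow> (nat \<Rightarrow> bmap \<times> bmap \<Rightarrow> 'y) \<Rightarrow> bool" where
  "kan_square Y X f n e k a b' \<longleftrightarrow> 1 \<le> n \<and> 1 \<le> k \<and>
     nat_trans (cube k n) X a \<and> nat_trans (boxk k n e) Y b' \<and>
     ncomp (boxk k n e) f b' = nrestr (boxk k n e) a"

definition uniform_kan_fib :: "'y cset \<Rightarrow> 'x cset \<Rightarrow> (nat \<Rightarrow> 'y \<Rightarrow> 'x) \<Rightarrow> ('x, 'y) filler_op \<Rightarrow> bool" where
  "uniform_kan_fib Y X f \<phi> \<longleftrightarrow>
     (\<forall>n e k a b'. kan_square Y X f n e k a b' \<longrightarrow>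
        nat_trans (cube k n) Y (\<phi> n e k a b') \<and>
        nrestr (boxk k n e) (\<phi> n e k a b') = b' \<and>
        ncomp (cube k n) f (\<phi> n e k a b') = a) \<and>
     (\<forall>n e k a b' j \<alpha>. kan_square Y X f n e k a b' \<longrightarrow> 1 \<le> j \<longrightarrow> nat_trans (yon j) (yon k) \<alpha> \<longrightarrow>
        ncomp (cube j n) (\<phi> n e k a b') (times1 \<alpha>) =
        \<phi> n e j (ncomp (cube j n) a (times1 \<alpha>)) (ncomp (boxk j n e) b' (times1 \<alpha>)))"

definition normal_filler :: "'y cset \<Rightarrow> 'x cset \<Rightarrow> (nat \<Rightarrow> 'y \<Rightarrow> 'x) \<Rightarrow> ('x, 'y) filler_op \<Rightarrow> bool" where
  "normal_filler Y X f \<phi> \<longleftrightarrow>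
     (\<forall>n e k c. 1 \<le> k \<longrightarrow> nat_trans (cube k n) Y c \<longrightarrow>
        (let c' = ncomp (cube k (Suc n)) c (one_times_pi n) in
         \<phi> (Suc n) e k (ncomp (cube k (Suc n)) f c') (nrestr (boxk k (Suc n) e) c') = c'))"

definition normal_uniform_kan_fib :: "'y cset \<Rightarrow> 'x cset \<Rightarrow> (nat \<Rightarrow> 'y \<Rightarrow> 'x) \<Rightarrow> bool" where
  "normal_uniform_kan_fib Y X f \<longleftrightarrow>
     (\<exists>\<phi>. uniform_kan_fib Y X f \<phi> \<and> normal_filler Y X f \<phi>)"

definition normal_uniform_kan_complex :: "'a cset \<Rightarrow> bool" where
  "normal_uniform_kan_complex A \<longleftrightarrow> normal_uniform_kan_fib A terminal (to_terminal A)"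

text \<open>The exponential: A^I[n] = Nat(y[n] x I, A); a B-map f : [n] -> [m] acts by
  precomposition with y(f) x 1, where y(f) : y[m] -> y[n] is g |-> g o f.\<close>
definition expo :: "'a cset \<Rightarrow> (nat \<Rightarrow> bmap \<times> bmap \<Rightarrow> 'a) cset" where
  "expo A = \<lparr> cells = (\<lambda>n. {\<eta>. nat_trans (cube n 1) A \<eta>}),
              act = (\<lambda>n m f \<eta>. (\<lambda>p z. if z \<in> cells (cube m 1) p
                                         then \<eta> p (bcomp n f (fst z), snd z) else undefined)) \<rparr>"

text \<open>r : A -> A^I induced by I -> 1: a |-> ((g,h) |-> A(g)(a)).\<close>
definition rmap :: "'a cset \<Rightarrow> (nat \<Rightarrow> 'a \<Rightarrow> (nat \<Rightarrow> bmap \<times> bmap \<Rightarrow> 'a))" where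
  "rmap A = (\<lambda>n a. if a \<in> cells A n
                   then (\<lambda>p z. if z \<in> cells (cube n 1) p then act A n p (fst z) a else undefined)
                   else undefined)"

end

theory Submission
  imports Defs
begin

lemma bmorD:
  assumes "bmor n m f"
  shows "f 0 = 0" "f (Suc n) = Suc m" "\<And>i. i \<le> Suc n \<Longrightarrow> f i \<le> Suc m" "\<And>i. Suc n < i \<Longrightarrow> f i = 0"
proof -
  show "f 0 = 0" "f (Suc n) = Suc m" "\<And>i. Suc n < i \<Longrightarrow> f i = 0" using assms by (auto simp: bmor_def)
  fix i assume "i \<le> Suc n" then show "f i \<le> Suc m" using assms
    by (cases "i = 0"; cases "i = Suc n") (auto simp: bmor_def)
qed

lemma bmorI:
  assumes "f 0 = 0" "f (Suc n) = Suc m" "\<And>i. i \<le> Suc n \<Longrightarrow> f i \<le> Suc m" "\<And>i. Suc n < i \<Longrightarrow> f i = 0"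
  shows "bmor n m f"
  using assms by (auto simp: bmor_def)

lemma bmor_bcomp: "bmor n m f \<Longrightarrow> bmor m p g \<Longrightarrow> bmor n p (bcomp n f g)"
  by (rule bmorI) (auto simp: bcomp_def bmorD)

lemma bcomp_assoc: "bmor n m f \<Longrightarrow> bcomp n f (bcomp m g h) = bcomp n (bcomp n f g) h"
  by (auto simp: bcomp_def bmorD fun_eq_iff)

lemma bcomp_bid_left: "bmor n m f \<Longrightarrow> bcomp n (bid n) f = f"
  by (auto simp: bcomp_def bid_def bmorD fun_eq_iff)

lemma bcomp_bid_right: "bmor n m f \<Longrightarrow> bcomp n f (bid m) = f"
  by (auto simp: bcomp_def bid_def bmorD fun_eq_iff)

lemma bmor_bid: "bmor n n (bid n)"
  by (rule bmorI) (auto simp: bid_def)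

definition dm :: "nat \<Rightarrow> bmap" where
  "dm m = (\<lambda>i. if i \<le> m then i else if i = Suc m then Suc (Suc m) else 0)"
definition g0 :: "nat \<Rightarrow> bmap" where
  "g0 m = (\<lambda>i. if i \<le> m then i else if i = Suc m then 0 else if i = Suc (Suc m) then Suc m else 0)"
definition pt1 :: "nat \<Rightarrow> nat \<Rightarrow> bmap" where
  "pt1 p v = (\<lambda>i. if i = 0 then 0 else if i = 1 then v else if i = 2 then Suc p else 0)"
definition pt2 :: "nat \<Rightarrow> nat \<Rightarrow> nat \<Rightarrow> bmap" where
  "pt2 p u v = (\<lambda>i. if i = 0 then 0 else if i = 1 then u else if i = 2 then v else if i = 3 then Suc p else 0)"
definition fp :: "nat \<Rightarrow> nat \<Rightarrow> bmap \<Rightarrow> bmap" where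
  "fp m m' f = (\<lambda>i. if i \<le> m then (if f i = Suc m' then Suc (Suc m') else f i)
      else if i = Suc m then Suc m' else if i = Suc (Suc m) then Suc (Suc m') else 0)"

lemma bmor_dm: "bmor m (Suc m) (dm m)"
  by (rule bmorI) (auto simp: dm_def)
lemma bmor_g0: "bmor (Suc m) m (g0 m)"
  by (rule bmorI) (auto simp: g0_def)
lemma bmor_pt1: "v \<le> Suc p \<Longrightarrow> bmor 1 p (pt1 p v)"
  by (rule bmorI) (auto simp: pt1_def)
lemma bmor_pt1': "v \<le> Suc p \<Longrightarrow> bmor (Suc 0) p (pt1 p v)"
  using bmor_pt1 by simp
lemma bmor_pt2: "u \<le> Suc p \<Longrightarrow> v \<le> Suc p \<Longrightarrow> bmor 2 p (pt2 p u v)"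
  by (rule bmorI) (auto simp: pt2_def numeral_eq_Suc)
lemma bmor_fp: "bmor m m' f \<Longrightarrow> bmor (Suc m) (Suc m') (fp m m' f)"
proof -
  assume f: "bmor m m' f"
  show ?thesis
  proof (rule bmorI)
    fix i assume "i \<le> Suc (Suc m)"
    then show "fp m m' f i \<le> Suc (Suc m')" using bmorD(3)[OF f, of i] by (auto simp: fp_def)
  qed (auto simp: fp_def bmorD(1)[OF f])
qed

lemma pt1_eta: "bmor 1 p h \<Longrightarrow> pt1 p (h 1) = h"
  by (auto simp: pt1_def fun_eq_iff bmorD) (metis One_nat_def Suc_1 bmorD(2,4) less_2_cases_iff not_less_eq)

lemma dm_g0: "bcomp m (dm m) (g0 m) = bid m"
  by (auto simp: bcomp_def dm_def g0_def bid_def fun_eq_iff)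

lemma dm_fp: "bmor m m' f \<Longrightarrow> bcomp m (dm m) (fp m m' f) = bcomp m f (dm m')"
proof (rule ext)
  fix i assume f: "bmor m m' f"
  consider "i \<le> m" | "i = Suc m" | "Suc m < i" by linarith
  then show "bcomp m (dm m) (fp m m' f) i = bcomp m f (dm m') i"
  proof cases
    case 1
    then have "f i \<le> Suc m'" using bmorD(3)[OF f, of i] by simp
    then show ?thesis using 1 by (auto simp: bcomp_def dm_def fp_def)
  qed (auto simp: bcomp_def dm_def fp_def bmorD(2)[OF f])
qed

lemma g0_fp: "bmor m m' f \<Longrightarrow> bcomp (Suc m) (g0 m) f = bcomp (Suc m) (fp m m' f) (g0 m')"
proof (rule ext)
  fix i assume f: "bmor m m' f"
  consider "i \<le> m" | "i = Suc m" | "i = Suc (Suc m)" | "Suc (Suc m) < i" by linarith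
  then show "bcomp (Suc m) (g0 m) f i = bcomp (Suc m) (fp m m' f) (g0 m') i"
  proof cases
    case 1
    then have "f i \<le> Suc m'" using bmorD(3)[OF f, of i] by simp
    then show ?thesis using 1 by (auto simp: bcomp_def g0_def fp_def)
  qed (auto simp: bcomp_def g0_def fp_def bmorD(1,2)[OF f])
qed

lemma pt1_comp: "bmor p p' f \<Longrightarrow> v \<le> Suc p \<Longrightarrow> bcomp 1 (pt1 p v) f = pt1 p' (f v)"
  by (auto simp: bcomp_def pt1_def fun_eq_iff bmorD)

lemma pt2_comp: "bmor p p' f \<Longrightarrow> u \<le> Suc p \<Longrightarrow> v \<le> Suc p \<Longrightarrow> bcomp 2 (pt2 p u v) f = pt2 p' (f u) (f v)"
  by (auto simp: bcomp_def pt2_def fun_eq_iff bmorD numeral_eq_Suc)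

declare bmor_pt1[simp] bmor_pt2[simp] bmor_dm[simp] bmor_g0[simp]

lemma bmor_face: "1 \<le> i \<Longrightarrow> i \<le> n \<Longrightarrow> bmor n (n - 1) (face n i d)"
  by (rule bmorI) (auto simp: face_def ep_def)

lemma obox_bmor: "h \<in> cells (obox n e) p \<Longrightarrow> bmor n p h"
  apply (clarsimp simp: obox_def)
  by (metis One_nat_def bmor_bcomp bmor_face)

lemma obox_act: "h \<in> cells (obox n e) p \<Longrightarrow> bmor p q f \<Longrightarrow> bcomp n h f \<in> cells (obox n e) q"
proof -
  assume h: "h \<in> cells (obox n e) p" and f: "bmor p q f"
  then obtain i d g where i: "1 \<le> i" "i \<le> n" "(i, d) \<noteq> (1, e)" and g: "bmor (n - 1) p g"
    and hg: "h = bcomp n (face n i d) g"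
    by (auto simp: obox_def)
  have "bcomp n h f = bcomp n (face n i d) (bcomp (n - 1) g f)"
    using hg bcomp_assoc[OF bmor_face[OF i(1,2)]] by simp
  moreover have "bmor (n - 1) q (bcomp (n - 1) g f)" using g f bmor_bcomp by blast
  ultimately show ?thesis using i by (auto simp: obox_def)
qed

lemma obox2_cases: "h \<in> cells (obox 2 True) p \<Longrightarrow> h 1 = 0 \<or> h 2 = 0 \<or> h 2 = Suc p"
  apply (clarsimp simp: obox_def)
  subgoal for i d g
    apply (cases "i = 1")
     apply (auto simp: bcomp_def face_def ep_def bmorD split: if_splits)
    done
  done

lemma obox1_cases: "h \<in> cells (obox 1 True) p \<Longrightarrow> h 1 = 0"
  by (clarsimp simp: obox_def bcomp_def face_def ep_def bmorD)

lemma obox_memI: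
  assumes "1 \<le> i" "i \<le> n" "(i, d) \<noteq> (1, e)" "bmor (n - 1) p g"
  shows "bcomp n (face n i d) g \<in> cells (obox n e) p"
proof -
  have "bcomp n (face n i d) g \<in> (\<lambda>g. bcomp n (face n i d) g) ` {g. bmor (n - 1) p g}"
    using assms(4) by blast
  then show ?thesis using assms(1-3) unfolding obox_def by (simp only: cset.select_convs mem_Collect_eq) blast
qed

lemma pt2_box_top: "u \<le> Suc q \<Longrightarrow> pt2 q u (Suc q) \<in> cells (obox 2 True) q"
proof -
  assume u: "u \<le> Suc q"
  have "pt2 q u (Suc q) = bcomp 2 (face 2 2 True) (pt1 q u)"
    by (auto simp: fun_eq_iff bcomp_def pt1_def pt2_def face_def ep_def numeral_eq_Suc)
  then show ?thesis using obox_memI[of 2 2 True True q "pt1 q u"] bmor_pt1[OF u] by simp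
qed

lemma pt2_box_bot: "u \<le> Suc q \<Longrightarrow> pt2 q u 0 \<in> cells (obox 2 True) q"
proof -
  assume u: "u \<le> Suc q"
  have "pt2 q u 0 = bcomp 2 (face 2 2 False) (pt1 q u)"
    by (auto simp: fun_eq_iff bcomp_def pt1_def pt2_def face_def ep_def numeral_eq_Suc)
  then show ?thesis using obox_memI[of 2 2 False True q "pt1 q u"] bmor_pt1[OF u] by simp
qed

declare One_nat_def[simp del]

lemma pt1_1[simp]: "pt1 p v 1 = v" by (simp add: pt1_def)
lemma pt2_12[simp]: "pt2 p u v 1 = u" "pt2 p u v 2 = v" by (simp_all add: pt2_def)

lemma bcomp_app: "i \<le> Suc n \<Longrightarrow> bcomp n f g i = g (f i)"
  by (simp add: bcomp_def)

lemma cube_simps[simp]: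
  "cells (cube k n) p = {z. bmor k p (fst z) \<and> bmor n p (snd z)}"
  "act (cube k n) = (\<lambda>p q f z. (bcomp k (fst z) f, bcomp n (snd z) f))"
  by (auto simp: cube_def cprod_def yon_def)

lemma boxk_simps[simp]:
  "cells (boxk k n e) p = {z. bmor k p (fst z) \<and> snd z \<in> cells (obox n e) p}"
  "act (boxk k n e) = (\<lambda>p q f z. (bcomp k (fst z) f, bcomp n (snd z) f))"
proof -
  have "act (obox n e) = (\<lambda>p q f g. bcomp n g f)" by (simp add: obox_def)
  then show "cells (boxk k n e) p = {z. bmor k p (fst z) \<and> snd z \<in> cells (obox n e) p}"
    "act (boxk k n e) = (\<lambda>p q f z. (bcomp k (fst z) f, bcomp n (snd z) f))"
    by (auto simp: boxk_def cprod_def yon_def)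
qed

lemma expo_simps[simp]:
  "cells (expo A) n = {\<eta>. nat_trans (cube n 1) A \<eta>}"
  "act (expo A) = (\<lambda>n m f \<eta>. (\<lambda>p z. if z \<in> cells (cube m 1) p
                                         then \<eta> p (bcomp n f (fst z), snd z) else undefined))"
  by (auto simp: expo_def)

lemma terminal_simps[simp]: "cells terminal m = UNIV" "act terminal = (\<lambda>n m f x. x)"
  by (auto simp: terminal_def)

lemma yon_simps[simp]: "cells (yon n) m = {g. bmor n m g}" "act (yon n) = (\<lambda>p q f g. bcomp n g f)"
  by (auto simp: yon_def)

declare cube_simps[simp del] boxk_simps[simp del]

lemma ntD1: "nat_trans X Y \<eta> \<Longrightarrow> x \<in> cells X m \<Longrightarrow> \<eta> m x \<in> cells Y m"
  by (simp add: nat_trans_def)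
lemma ntD2: "nat_trans X Y \<eta> \<Longrightarrow> bmor n m f \<Longrightarrow> x \<in> cells X n \<Longrightarrow> \<eta> m (act X n m f x) = act Y n m f (\<eta> n x)"
  by (simp add: nat_trans_def)
lemma ntD3: "nat_trans X Y \<eta> \<Longrightarrow> x \<notin> cells X m \<Longrightarrow> \<eta> m x = undefined"
  by (simp add: nat_trans_def)
lemma ntI:
  assumes "\<And>m x. x \<in> cells X m \<Longrightarrow> \<eta> m x \<in> cells Y m"
    "\<And>n m f x. bmor n m f \<Longrightarrow> x \<in> cells X n \<Longrightarrow> \<eta> m (act X n m f x) = act Y n m f (\<eta> n x)"
    "\<And>m x. x \<notin> cells X m \<Longrightarrow> \<eta> m x = undefined"
  shows "nat_trans X Y \<eta>"
  using assms by (simp add: nat_trans_def)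

lemma bmor_le: "bmor n p f \<Longrightarrow> i \<le> Suc n \<Longrightarrow> f i \<le> Suc p"
  by (rule bmorD(3))

lemma cube_act_cell: "z \<in> cells (cube k n) p \<Longrightarrow> bmor p q f \<Longrightarrow> act (cube k n) p q f z \<in> cells (cube k n) q"
  by (auto simp: cube_simps intro: bmor_bcomp)

lemma expo_act_cell:
  assumes g: "\<gamma> \<in> cells (expo A) m" and f: "bmor m m' f"
  shows "act (expo A) m m' f \<gamma> \<in> cells (expo A) m'"
proof -
  have gN: "nat_trans (cube m 1) A \<gamma>" using g by simp
  show ?thesis
    apply simp
    apply (rule ntI)
    subgoal for p z using ntD1[OF gN, of "(bcomp m f (fst z), snd z)" p] bmor_bcomp[OF f, of p "fst z"]
      by (auto simp: cube_simps)
    subgoal for p q h z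
      using ntD2[OF gN, of p q h "(bcomp m f (fst z), snd z)"] f
      by (auto simp: cube_simps bcomp_assoc intro: bmor_bcomp)
    subgoal by simp
    done
qed

definition aA :: "nat \<Rightarrow> nat \<Rightarrow> bmap \<times> bmap \<Rightarrow> unit" where
  "aA m = (\<lambda>p z. if z \<in> cells (cube (Suc m) 2) p then () else undefined)"

definition bA :: "(nat \<Rightarrow> bmap \<times> bmap \<Rightarrow> 'a) \<Rightarrow> nat \<Rightarrow> nat \<Rightarrow> bmap \<times> bmap \<Rightarrow> 'a" where
  "bA \<gamma> m = (\<lambda>p z. if z \<in> cells (boxk (Suc m) 2 True) p
      then \<gamma> p (bcomp m (dm m) (fst z), pt1 p (if snd z 2 = Suc p then snd z 1 else 0)) else undefined)"

definition aB :: "(nat \<Rightarrow> bmap \<times> bmap \<Rightarrow> 'a) \<Rightarrow> nat \<Rightarrow> nat \<Rightarrow> bmap \<times> bmap \<Rightarrow> (nat \<Rightarrow> bmap \<times> bmap \<Rightarrow> 'a)" where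
  "aB H k = (\<lambda>p z. if z \<in> cells (cube k 1) p then
      (\<lambda>q w. if w \<in> cells (cube p 1) q then H q (bcomp k (fst z) (fst w), pt2 q (snd w 1) (fst w (snd z 1))) else undefined)
      else undefined)"

definition bB :: "(nat \<Rightarrow> 'a \<Rightarrow> 'b) \<Rightarrow> (nat \<Rightarrow> bmap \<times> bmap \<Rightarrow> 'a) \<Rightarrow> nat \<Rightarrow> nat \<Rightarrow> bmap \<times> bmap \<Rightarrow> 'b" where
  "bB b \<gamma> m = (\<lambda>p z. if z \<in> cells (boxk (Suc m) 1 True) p then b p (\<gamma> p (bcomp m (dm m) (fst z), pt1 p 0)) else undefined)"

lemma aA_nt: "nat_trans (cube (Suc m) 2) terminal (aA m)"
  by (rule ntI) (auto simp: aA_def cube_act_cell)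

lemma snd_le: "bmor 2 p h \<Longrightarrow> h 1 \<le> Suc p" "bmor 2 p h \<Longrightarrow> h 2 \<le> Suc p" "bmor 1 p h \<Longrightarrow> h 1 \<le> Suc p"
  by (auto intro: bmor_le)

lemma snd_le': "bmor 2 p h \<Longrightarrow> h (Suc 0) \<le> Suc p" "bmor (Suc 0) p h \<Longrightarrow> h (Suc 0) \<le> Suc p"
  by (auto intro: bmor_le)

lemma bA_nt:
  assumes gN: "nat_trans (cube m 1) A \<gamma>"
  shows "nat_trans (boxk (Suc m) 2 True) A (bA \<gamma> m)"
proof (rule ntI)
  fix p z assume z: "z \<in> cells (boxk (Suc m) 2 True) p"
  then have h2: "bmor 2 p (snd z)" by (auto simp: boxk_simps intro: obox_bmor)
  have g: "bmor (Suc m) p (fst z)" using z by (simp add: boxk_simps)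
  have v: "(if snd z 2 = Suc p then snd z 1 else 0) \<le> Suc p" using snd_le(1)[OF h2] by simp
  have "(bcomp m (dm m) (fst z), pt1 p (if snd z 2 = Suc p then snd z 1 else 0)) \<in> cells (cube m 1) p"
    using bmor_pt1[OF v] bmor_bcomp[OF bmor_dm g] by (simp add: cube_simps)
  then show "bA \<gamma> m p z \<in> cells A p" using z ntD1[OF gN] by (simp add: bA_def)
next
  fix p q f z assume f: "bmor p q f" and z: "z \<in> cells (boxk (Suc m) 2 True) p"
  have h2: "bmor 2 p (snd z)" using z by (auto simp: boxk_simps intro: obox_bmor)
  have g: "bmor (Suc m) p (fst z)" using z by (simp add: boxk_simps)
  have box': "act (boxk (Suc m) 2 True) p q f z \<in> cells (boxk (Suc m) 2 True) q"
    using z f by (auto simp: boxk_simps intro: bmor_bcomp obox_act)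
  define v where "v = (if snd z 2 = Suc p then snd z 1 else 0)"
  have v: "v \<le> Suc p" using h2 by (auto simp: v_def intro: snd_le snd_le')
  have fv: "f v = (if bcomp 2 (snd z) f 2 = Suc q then bcomp 2 (snd z) f 1 else 0)"
    using obox2_cases[of "snd z" p] z f h2 bmorD[OF f] bmorD[OF h2]
    by (auto simp: v_def bcomp_app boxk_simps)
  have "act A p q f (\<gamma> p (bcomp m (dm m) (fst z), pt1 p v)) = \<gamma> q (bcomp m (bcomp m (dm m) (fst z)) f, bcomp 1 (pt1 p v) f)"
    using ntD2[OF gN f, of "(bcomp m (dm m) (fst z), pt1 p v)"] g v
    by (simp add: cube_simps bmor_pt1 bmor_bcomp[OF bmor_dm])
  then show "bA \<gamma> m q (act (boxk (Suc m) 2 True) p q f z) = act A p q f (bA \<gamma> m p z)"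
    using box' z f v fv
    by (simp add: bA_def pt1_comp bcomp_assoc[OF bmor_dm] v_def[symmetric]) (simp add: boxk_simps bcomp_assoc[OF bmor_dm])
next
  fix m' z assume "z \<notin> cells (boxk (Suc m) 2 True) m'"
  then show "bA \<gamma> m m' z = undefined" by (simp add: bA_def)
qed

lemma aB_inner_nt:
  assumes HN: "nat_trans (cube k 2) A H" and z: "z \<in> cells (cube k 1) p"
  shows "aB H k p z \<in> cells (expo A) p"
proof -
  have g: "bmor k p (fst z)" and h: "bmor 1 p (snd z)" using z by (auto simp: cube_simps)
  have h1: "snd z 1 \<le> Suc p" using h by (rule snd_le)
  show ?thesis
    apply (simp add: aB_def z)
    apply (rule ntI)
    subgoal for q w
    proof -
      assume w: "w \<in> cells (cube p 1) q"
      have w1: "bmor p q (fst w)" and w2: "bmor 1 q (snd w)" using w by (auto simp: cube_simps)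
      have u: "snd w 1 \<le> Suc q" using w2 by (rule snd_le)
      have v: "fst w (snd z 1) \<le> Suc q" using w1 h1 by (rule bmor_le)
      show ?thesis using w ntD1[OF HN, of "(bcomp k (fst z) (fst w), pt2 q (snd w 1) (fst w (snd z 1)))" q]
        bmor_bcomp[OF g w1] bmor_pt2[OF u v] by (simp add: cube_simps)
    qed
    subgoal for q q' f w
    proof -
      assume f: "bmor q q' f" and w: "w \<in> cells (cube p 1) q"
      have w1: "bmor p q (fst w)" and w2: "bmor 1 q (snd w)" using w by (auto simp: cube_simps)
      have u: "snd w 1 \<le> Suc q" using w2 by (rule snd_le)
      have v: "fst w (snd z 1) \<le> Suc q" using w1 h1 by (rule bmor_le)
      have X: "(bcomp k (fst z) (fst w), pt2 q (snd w 1) (fst w (snd z 1))) \<in> cells (cube k 2) q"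
        using g w1 u v by (auto simp: cube_simps intro: bmor_bcomp bmor_pt2)
      have "H q' (act (cube k 2) q q' f (bcomp k (fst z) (fst w), pt2 q (snd w 1) (fst w (snd z 1))))
          = act A q q' f (H q (bcomp k (fst z) (fst w), pt2 q (snd w 1) (fst w (snd z 1))))"
        by (rule ntD2[OF HN f X])
      moreover have "act (cube p 1) q q' f w \<in> cells (cube p 1) q'" using cube_act_cell[OF w f] .
      ultimately show ?thesis using w f g u v h1
        by (simp add: pt2_comp bcomp_assoc bcomp_app cube_simps)
    qed
    subgoal by simp
    done
qed

lemma aB_nt:
  assumes HN: "nat_trans (cube k 2) A H"
  shows "nat_trans (cube k 1) (expo A) (aB H k)"
proof (rule ntI)
  fix p z assume "z \<in> cells (cube k 1) p" then show "aB H k p z \<in> cells (expo A) p" by (rule aB_inner_nt[OF HN])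
next
  fix p p' f z assume f: "bmor p p' f" and z: "z \<in> cells (cube k 1) p"
  have g: "bmor k p (fst z)" and h: "bmor 1 p (snd z)" using z by (auto simp: cube_simps)
  have h1: "snd z 1 \<le> Suc p" using h by (rule snd_le)
  have z': "act (cube k 1) p p' f z \<in> cells (cube k 1) p'" using cube_act_cell[OF z f] .
  show "aB H k p' (act (cube k 1) p p' f z) = act (expo A) p p' f (aB H k p z)"
    apply (rule ext)+
    subgoal for q w
      using z z' f g h1
      apply (cases "w \<in> cells (cube p' 1) q")
       apply (auto simp add: aB_def cube_simps bcomp_assoc bcomp_app bmor_bcomp)
      done
    done
next
  fix m z assume "z \<notin> cells (cube k 1) m" then show "aB H k m z = undefined" by (simp add: aB_def)
qed

lemma bB_nt:
  assumes gN: "nat_trans (cube m 1) A \<gamma>" and bN: "nat_trans A B b"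
  shows "nat_trans (boxk (Suc m) 1 True) B (bB b \<gamma> m)"
proof (rule ntI)
  fix p z assume z: "z \<in> cells (boxk (Suc m) 1 True) p"
  then show "bB b \<gamma> m p z \<in> cells B p"
    by (auto simp: bB_def boxk_simps cube_simps intro!: ntD1[OF bN] ntD1[OF gN] bmor_pt1 bmor_pt1' bmor_bcomp[OF bmor_dm])
next
  fix p q f z assume f: "bmor p q f" and z: "z \<in> cells (boxk (Suc m) 1 True) p"
  have g: "bmor (Suc m) p (fst z)" using z by (simp add: boxk_simps)
  have box': "act (boxk (Suc m) 1 True) p q f z \<in> cells (boxk (Suc m) 1 True) q"
    using z f by (auto simp: boxk_simps intro: bmor_bcomp obox_act)
  have c: "(bcomp m (dm m) (fst z), pt1 p 0) \<in> cells (cube m 1) p"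
    using g by (simp add: cube_simps bmor_pt1 bmor_bcomp[OF bmor_dm])
  have "act B p q f (b p (\<gamma> p (bcomp m (dm m) (fst z), pt1 p 0))) = b q (act A p q f (\<gamma> p (bcomp m (dm m) (fst z), pt1 p 0)))"
    using ntD2[OF bN f ntD1[OF gN c]] by simp
  also have "\<dots> = b q (\<gamma> q (bcomp m (bcomp m (dm m) (fst z)) f, bcomp 1 (pt1 p 0) f))"
    using ntD2[OF gN f c] by (simp add: cube_simps)
  finally show "bB b \<gamma> m q (act (boxk (Suc m) 1 True) p q f z) = act B p q f (bB b \<gamma> m p z)"
    using box' z f
    by (simp add: bB_def pt1_comp bcomp_assoc[OF bmor_dm] bmorD(1)[OF f]) (simp add: boxk_simps bcomp_assoc[OF bmor_dm])
next
  fix m' z assume "z \<notin> cells (boxk (Suc m) 1 True) m'"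
  then show "bB b \<gamma> m m' z = undefined" by (simp add: bB_def)
qed


lemma bmor_shift: "bmor n (Suc n) (shift n)"
  by (rule bmorI) (auto simp: shift_def)

lemma ukf_fill:
  assumes "uniform_kan_fib Y X f \<phi>" "kan_square Y X f n e k a b'"
  shows "nat_trans (cube k n) Y (\<phi> n e k a b')" "nrestr (boxk k n e) (\<phi> n e k a b') = b'"
    "ncomp (cube k n) f (\<phi> n e k a b') = a"
  using assms unfolding uniform_kan_fib_def by blast+

lemma ukf_unif:
  assumes "uniform_kan_fib Y X f \<phi>" "kan_square Y X f n e k a b'" "1 \<le> j" "nat_trans (yon j) (yon k) \<alpha>"
  shows "ncomp (cube j n) (\<phi> n e k a b') (times1 \<alpha>) =
        \<phi> n e j (ncomp (cube j n) a (times1 \<alpha>)) (ncomp (boxk j n e) b' (times1 \<alpha>))"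
  using assms unfolding uniform_kan_fib_def by blast

lemma nf_app:
  assumes "normal_filler Y X f \<phi>" "1 \<le> k" "nat_trans (cube k n) Y c"
  shows "\<phi> (Suc n) e k (ncomp (cube k (Suc n)) f (ncomp (cube k (Suc n)) c (one_times_pi n)))
           (nrestr (boxk k (Suc n) e) (ncomp (cube k (Suc n)) c (one_times_pi n)))
         = ncomp (cube k (Suc n)) c (one_times_pi n)"
  using assms unfolding normal_filler_def Let_def by blast

lemma boxk_sub: "z \<in> cells (boxk k n e) p \<Longrightarrow> z \<in> cells (cube k n) p"
  by (auto simp: boxk_simps cube_simps obox_bmor)

locale S =
  fixes A :: "'a cset" and B :: "'b cset" and \<pi> :: "nat \<Rightarrow> 'b \<Rightarrow> (nat \<Rightarrow> bmap \<times> bmap \<Rightarrow> 'a)"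
    and b :: "nat \<Rightarrow> 'a \<Rightarrow> 'b"
    and \<phi>A :: "(unit, 'a) filler_op" and \<phi>B :: "(nat \<Rightarrow> bmap \<times> bmap \<Rightarrow> 'a, 'b) filler_op"
  assumes cubA: "cubical A" and cubB: "cubical B" and piN: "nat_trans B (expo A) \<pi>"
    and uA: "uniform_kan_fib A terminal (to_terminal A) \<phi>A"
    and nA: "normal_filler A terminal (to_terminal A) \<phi>A"
    and uB: "uniform_kan_fib B (expo A) \<pi> \<phi>B"
    and nB: "normal_filler B (expo A) \<pi> \<phi>B"
    and bN: "nat_trans A B b" and rb: "ncomp A \<pi> b = rmap A"
begin

definition HH where "HH \<gamma> m = \<phi>A 2 True (Suc m) (aA m) (bA \<gamma> m)"
definition LL where "LL \<gamma> m = \<phi>B 1 True (Suc m) (aB (HH \<gamma> m) (Suc m)) (bB b \<gamma> m)"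
definition jj where "jj m \<gamma> = (if \<gamma> \<in> cells (expo A) m then LL \<gamma> m m (g0 m, pt1 m (Suc m)) else undefined)"

lemma kanA:
  assumes gN: "nat_trans (cube m 1) A \<gamma>"
  shows "kan_square A terminal (to_terminal A) 2 True (Suc m) (aA m) (bA \<gamma> m)"
  unfolding kan_square_def
proof (intro conjI)
  show "ncomp (boxk (Suc m) 2 True) (to_terminal A) (bA \<gamma> m) = nrestr (boxk (Suc m) 2 True) (aA m)"
    apply (rule ext)+
    subgoal for p z
      using ntD1[OF bA_nt[OF gN], of z p] boxk_sub[of z "Suc m" 2 True p]
      by (auto simp: ncomp_def nrestr_def to_terminal_def aA_def)
    done
qed (auto simp: aA_nt bA_nt[OF gN])

lemma HN: "nat_trans (cube m 1) A \<gamma> \<Longrightarrow> nat_trans (cube (Suc m) 2) A (HH \<gamma> m)"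
  unfolding HH_def by (rule ukf_fill(1)[OF uA kanA])

lemma Hbox: "nat_trans (cube m 1) A \<gamma> \<Longrightarrow> z \<in> cells (boxk (Suc m) 2 True) p \<Longrightarrow> HH \<gamma> m p z = bA \<gamma> m p z"
  unfolding HH_def using ukf_fill(2)[OF uA kanA, of m \<gamma>]
  by (metis nrestr_def)

lemma rb_app: "y \<in> cells A p \<Longrightarrow> \<pi> p (b p y) = rmap A p y"
  using fun_cong[OF fun_cong[OF rb, of p], of y] by (simp add: ncomp_def)

lemma kanB:
  assumes gN: "nat_trans (cube m 1) A \<gamma>"
  shows "kan_square B (expo A) \<pi> 1 True (Suc m) (aB (HH \<gamma> m) (Suc m)) (bB b \<gamma> m)"
  unfolding kan_square_def
proof (intro conjI)
  show "ncomp (boxk (Suc m) 1 True) \<pi> (bB b \<gamma> m) = nrestr (boxk (Suc m) 1 True) (aB (HH \<gamma> m) (Suc m))"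
  proof (rule ext, rule ext)
    fix p z
    show "ncomp (boxk (Suc m) 1 True) \<pi> (bB b \<gamma> m) p z = nrestr (boxk (Suc m) 1 True) (aB (HH \<gamma> m) (Suc m)) p z"
    proof (cases "z \<in> cells (boxk (Suc m) 1 True) p")
      case False then show ?thesis by (simp add: ncomp_def nrestr_def)
    next
      case True
      have g: "bmor (Suc m) p (fst z)" using True by (simp add: boxk_simps)
      have z1: "snd z 1 = 0" using True by (intro obox1_cases[of _ p]) (simp add: boxk_simps)
      have zc: "z \<in> cells (cube (Suc m) 1) p" using boxk_sub[OF True] .
      define D where "D = bcomp m (dm m) (fst z)"
      have D: "bmor m p D" using g by (simp add: D_def bmor_bcomp[OF bmor_dm])
      have c: "(D, pt1 p 0) \<in> cells (cube m 1) p" using D by (simp add: cube_simps bmor_pt1)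
      have y: "\<gamma> p (D, pt1 p 0) \<in> cells A p" by (rule ntD1[OF gN c])
      have "\<pi> p (b p (\<gamma> p (D, pt1 p 0))) = aB (HH \<gamma> m) (Suc m) p z"
      proof (rule ext, rule ext)
        fix q w
        show "\<pi> p (b p (\<gamma> p (D, pt1 p 0))) q w = aB (HH \<gamma> m) (Suc m) p z q w"
        proof (cases "w \<in> cells (cube p 1) q")
          case False then show ?thesis using y zc by (simp add: rb_app rmap_def aB_def)
        next
          case wc: True
          have w1: "bmor p q (fst w)" and w2: "bmor 1 q (snd w)" using wc by (auto simp: cube_simps)
          have u: "snd w 1 \<le> Suc q" using w2 by (rule snd_le)
          have bx: "(bcomp (Suc m) (fst z) (fst w), pt2 q (snd w 1) 0) \<in> cells (boxk (Suc m) 2 True) q"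
            using g w1 u by (simp add: boxk_simps pt2_box_bot bmor_bcomp)
          have "act A p q (fst w) (\<gamma> p (D, pt1 p 0)) = \<gamma> q (bcomp m D (fst w), bcomp 1 (pt1 p 0) (fst w))"
            using ntD2[OF gN w1 c] by (simp add: cube_simps)
          then show ?thesis using y zc wc z1 Hbox[OF gN bx] bmorD(1)[OF w1] w1
            by (simp add: rb_app rmap_def aB_def bA_def pt1_comp D_def bcomp_assoc[OF bmor_dm] bx)
        qed
      qed
      then show ?thesis using True by (simp add: ncomp_def nrestr_def bB_def D_def)
    qed
  qed
qed (auto simp: aB_nt HN[OF gN] bB_nt[OF gN bN])

lemma LN: "nat_trans (cube m 1) A \<gamma> \<Longrightarrow> nat_trans (cube (Suc m) 1) B (LL \<gamma> m)"
  unfolding LL_def by (rule ukf_fill(1)[OF uB kanB])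

lemma piL: "nat_trans (cube m 1) A \<gamma> \<Longrightarrow> z \<in> cells (cube (Suc m) 1) p \<Longrightarrow> \<pi> p (LL \<gamma> m p z) = aB (HH \<gamma> m) (Suc m) p z"
  unfolding LL_def using ukf_fill(3)[OF uB kanB, of m \<gamma>]
  by (metis ncomp_def)

end

context S begin

lemma jj_pi:
  assumes g: "\<gamma> \<in> cells (expo A) m"
  shows "\<pi> m (jj m \<gamma>) = \<gamma>"
proof -
  have gN: "nat_trans (cube m 1) A \<gamma>" using g by simp
  have pc: "(g0 m, pt1 m (Suc m)) \<in> cells (cube (Suc m) 1) m" by (simp add: cube_simps bmor_g0 bmor_pt1)
  have "aB (HH \<gamma> m) (Suc m) m (g0 m, pt1 m (Suc m)) = \<gamma>"
  proof (rule ext, rule ext)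
    fix q w
    show "aB (HH \<gamma> m) (Suc m) m (g0 m, pt1 m (Suc m)) q w = \<gamma> q w"
    proof (cases "w \<in> cells (cube m 1) q")
      case False then show ?thesis using pc ntD3[OF gN False] by (simp add: aB_def)
    next
      case wc: True
      have w1: "bmor m q (fst w)" and w2: "bmor 1 q (snd w)" using wc by (auto simp: cube_simps)
      have u: "snd w 1 \<le> Suc q" using w2 by (rule snd_le)
      have top: "fst w (Suc m) = Suc q" using bmorD(2)[OF w1] .
      have bx: "(bcomp (Suc m) (g0 m) (fst w), pt2 q (snd w 1) (Suc q)) \<in> cells (boxk (Suc m) 2 True) q"
        using w1 u bmor_bcomp[OF bmor_g0 w1] by (simp add: boxk_simps pt2_box_top)
      have e1: "bcomp m (dm m) (bcomp (Suc m) (g0 m) (fst w)) = fst w"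
        by (simp add: bcomp_assoc[OF bmor_dm] dm_g0 bcomp_bid_left[OF w1])
      have ev: "bA \<gamma> m q (bcomp (Suc m) (g0 m) (fst w), pt2 q (snd w 1) (Suc q)) = \<gamma> q w"
        using bx e1 pt1_eta[OF w2] by (simp add: bA_def pt2_def)
      show ?thesis using pc wc Hbox[OF gN bx] top ev
        by (simp add: aB_def)
    qed
  qed
  then show ?thesis using piL[OF gN pc] g by (simp add: jj_def)
qed

lemma jj_r:
  assumes x: "x \<in> cells A m"
  shows "jj m (rmap A m x) = b m x"
proof -
  define \<gamma> where "\<gamma> = rmap A m x"
  have g: "\<gamma> \<in> cells (expo A) m" using rb_app[OF x] ntD1[OF piN ntD1[OF bN x]] by (simp add: \<gamma>_def)
  have gN: "nat_trans (cube m 1) A \<gamma>" using g by simp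
  have actc: "\<And>n m f x. bmor n m f \<Longrightarrow> x \<in> cells A n \<Longrightarrow> act A n m f x \<in> cells A m"
    using cubA by (simp add: cubical_def)
  have actcomp: "\<And>n m p f g x. bmor n m f \<Longrightarrow> bmor m p g \<Longrightarrow> x \<in> cells A n \<Longrightarrow>
        act A n p (bcomp n f g) x = act A m p g (act A n m f x)"
    using cubA by (simp add: cubical_def)
  have actid: "act A m m (bid m) x = x" using cubA x by (simp add: cubical_def)
  define cA where "cA = (\<lambda>p z. if z \<in> cells (cube (Suc m) 1) p then act A m p (bcomp m (dm m) (fst z)) x else undefined)"
  have cAN: "nat_trans (cube (Suc m) 1) A cA"
  proof (rule ntI)
    fix p z assume "z \<in> cells (cube (Suc m) 1) p" then show "cA p z \<in> cells A p"
      using x by (auto simp: cA_def cube_simps intro!: actc bmor_bcomp[OF bmor_dm])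
  next
    fix p q f z assume f: "bmor p q f" and z: "z \<in> cells (cube (Suc m) 1) p"
    have D: "bmor m p (bcomp m (dm m) (fst z))" using z by (simp add: cube_simps bmor_bcomp[OF bmor_dm])
    show "cA q (act (cube (Suc m) 1) p q f z) = act A p q f (cA p z)"
      using cube_act_cell[OF z f] z actcomp[OF D f x]
      by (simp add: cA_def bcomp_assoc[OF bmor_dm] cube_simps)
  qed (simp add: cA_def)
  define c1 where "c1 = ncomp (cube (Suc m) (Suc 1)) cA (one_times_pi 1)"
  have c1_app: "\<And>p z. z \<in> cells (cube (Suc m) 2) p \<Longrightarrow> c1 p z = act A m p (bcomp m (dm m) (fst z)) x"
    by (auto simp: c1_def ncomp_def one_times_pi_def cA_def cube_simps intro: bmor_bcomp[OF bmor_shift])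
  have c1_off: "\<And>p z. z \<notin> cells (cube (Suc m) 2) p \<Longrightarrow> c1 p z = undefined"
    by (auto simp: c1_def ncomp_def)
  have e1: "ncomp (cube (Suc m) (Suc 1)) (to_terminal A) c1 = aA m"
    apply (rule ext)+
    subgoal for p z
      using c1_app[of z p] x
      by (auto simp: ncomp_def to_terminal_def aA_def cube_simps intro!: actc bmor_bcomp[OF bmor_dm])
    done
  have e2: "nrestr (boxk (Suc m) (Suc 1) True) c1 = bA \<gamma> m"
    apply (rule ext)+
    subgoal for p z
    proof (cases "z \<in> cells (boxk (Suc m) 2 True) p")
      case True
      have h2: "bmor 2 p (snd z)" using True by (auto simp: boxk_simps intro: obox_bmor)
      have c: "(bcomp m (dm m) (fst z), pt1 p (if snd z 2 = Suc p then snd z 1 else 0)) \<in> cells (cube m 1) p"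
      proof -
        have g: "bmor (Suc m) p (fst z)" using True by (simp add: boxk_simps)
        have v: "(if snd z 2 = Suc p then snd z 1 else 0) \<le> Suc p" using snd_le(1)[OF h2] by simp
        show ?thesis using bmor_pt1[OF v] bmor_bcomp[OF bmor_dm g] by (simp add: cube_simps)
      qed
      then show ?thesis using True c1_app[OF boxk_sub[OF True]] x
        by (simp add: nrestr_def bA_def \<gamma>_def rmap_def)
    qed (simp add: nrestr_def bA_def)
    done
  have H: "HH \<gamma> m = c1"
    using nf_app[OF nA _ cAN, of True] e1 e2 unfolding HH_def c1_def by (simp add: numeral_2_eq_2)
  define cB where "cB = (\<lambda>p z. if z \<in> cells (cube (Suc m) 0) p then b p (act A m p (bcomp m (dm m) (fst z)) x) else undefined)"
  have cBN: "nat_trans (cube (Suc m) 0) B cB"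
  proof (rule ntI)
    fix p z assume "z \<in> cells (cube (Suc m) 0) p" then show "cB p z \<in> cells B p"
      using x by (auto simp: cB_def cube_simps intro!: ntD1[OF bN] actc bmor_bcomp[OF bmor_dm])
  next
    fix p q f z assume f: "bmor p q f" and z: "z \<in> cells (cube (Suc m) 0) p"
    have D: "bmor m p (bcomp m (dm m) (fst z))" using z by (simp add: cube_simps bmor_bcomp[OF bmor_dm])
    show "cB q (act (cube (Suc m) 0) p q f z) = act B p q f (cB p z)"
      using cube_act_cell[OF z f] z actcomp[OF D f x] ntD2[OF bN f actc[OF D x]]
      by (simp add: cB_def bcomp_assoc[OF bmor_dm] cube_simps)
  qed (simp add: cB_def)
  define c2 where "c2 = ncomp (cube (Suc m) (Suc 0)) cB (one_times_pi 0)"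
  have c2_app: "\<And>p z. z \<in> cells (cube (Suc m) 1) p \<Longrightarrow> c2 p z = b p (act A m p (bcomp m (dm m) (fst z)) x)"
    by (auto simp: c2_def ncomp_def one_times_pi_def cB_def cube_simps One_nat_def intro: bmor_bcomp[OF bmor_shift])
  have f1: "ncomp (cube (Suc m) 1) \<pi> c2 = aB (HH \<gamma> m) (Suc m)"
  proof (rule ext, rule ext)
    fix p z
    show "ncomp (cube (Suc m) 1) \<pi> c2 p z = aB (HH \<gamma> m) (Suc m) p z"
    proof (cases "z \<in> cells (cube (Suc m) 1) p")
      case False then show ?thesis by (simp add: ncomp_def aB_def)
    next
      case True
      have D: "bmor m p (bcomp m (dm m) (fst z))" using True by (simp add: cube_simps bmor_bcomp[OF bmor_dm])
      have y: "act A m p (bcomp m (dm m) (fst z)) x \<in> cells A p" by (rule actc[OF D x])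
      show ?thesis
      proof (rule ext, rule ext)
        fix q w
        show "ncomp (cube (Suc m) 1) \<pi> c2 p z q w = aB (HH \<gamma> m) (Suc m) p z q w"
        proof (cases "w \<in> cells (cube p 1) q")
          case False then show ?thesis using True c2_app[OF True] y
            by (simp add: ncomp_def aB_def rb_app rmap_def)
        next
          case wc: True
          have w1: "bmor p q (fst w)" and w2: "bmor 1 q (snd w)" using wc by (auto simp: cube_simps)
          have u: "snd w 1 \<le> Suc q" using w2 by (rule snd_le)
          have v: "fst w (snd z 1) \<le> Suc q" using True w1 by (auto simp: cube_simps intro: bmor_le snd_le snd_le')
          have cc: "(bcomp (Suc m) (fst z) (fst w), pt2 q (snd w 1) (fst w (snd z 1))) \<in> cells (cube (Suc m) 2) q"
            using True w1 u v by (auto simp: cube_simps intro: bmor_bcomp bmor_pt2)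
          show ?thesis using True c2_app[OF True] y wc c1_app[OF cc] actcomp[OF D w1 x]
            by (simp add: ncomp_def aB_def rb_app rmap_def H bcomp_assoc[OF bmor_dm])
        qed
      qed
    qed
  qed
  have f2: "nrestr (boxk (Suc m) 1 True) c2 = bB b \<gamma> m"
    apply (rule ext)+
    subgoal for p z
    proof (cases "z \<in> cells (boxk (Suc m) 1 True) p")
      case True
      have c: "(bcomp m (dm m) (fst z), pt1 p 0) \<in> cells (cube m 1) p"
        using True by (auto simp: boxk_simps cube_simps intro!: bmor_bcomp[OF bmor_dm] bmor_pt1 bmor_pt1')
      then show ?thesis using True c2_app[OF boxk_sub[OF True]] x
        by (simp add: nrestr_def bB_def \<gamma>_def rmap_def)
    qed (simp add: nrestr_def bB_def)
    done
  have L: "LL \<gamma> m = c2"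
    using nf_app[OF nB _ cBN, of True] f1 f2 unfolding LL_def c2_def by (simp add: One_nat_def)
  show ?thesis
    using g c2_app[of "(g0 m, pt1 m (Suc m))" m]
    by (simp add: jj_def \<gamma>_def[symmetric] L cube_simps bmor_g0 bmor_pt1 dm_g0 actid)
qed

lemma jj_nat:
  assumes f: "bmor m m' f" and g: "\<gamma> \<in> cells (expo A) m"
  shows "jj m' (act (expo A) m m' f \<gamma>) = act B m m' f (jj m \<gamma>)"
proof -
  define \<gamma>' where "\<gamma>' = act (expo A) m m' f \<gamma>"
  have g': "\<gamma>' \<in> cells (expo A) m'" unfolding \<gamma>'_def by (rule expo_act_cell[OF g f])
  have gN: "nat_trans (cube m 1) A \<gamma>" using g by simp
  have gN': "nat_trans (cube m' 1) A \<gamma>'" using g' by simp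
  have g'app: "\<And>p w. w \<in> cells (cube m' 1) p \<Longrightarrow> \<gamma>' p w = \<gamma> p (bcomp m f (fst w), snd w)"
    by (simp add: \<gamma>'_def)
  define F where "F = fp m m' f"
  have F: "bmor (Suc m) (Suc m') F" unfolding F_def by (rule bmor_fp[OF f])
  define \<alpha> where "\<alpha> = (\<lambda>p g. if bmor (Suc m') p g then bcomp (Suc m) F g else undefined)"
  have \<alpha>N: "nat_trans (yon (Suc m')) (yon (Suc m)) \<alpha>"
    by (rule ntI) (auto simp: \<alpha>_def bmor_bcomp[OF F] bcomp_assoc[OF F] intro: bmor_bcomp)
  have \<alpha>app: "\<And>p g. bmor (Suc m') p g \<Longrightarrow> \<alpha> p g = bcomp (Suc m) F g" by (simp add: \<alpha>_def)
  have t1: "\<And>X \<eta> p z. z \<in> cells X p \<Longrightarrow> ncomp X \<eta> (times1 \<alpha>) p z = \<eta> p (\<alpha> p (fst z), snd z)"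
    by (simp add: ncomp_def times1_def)
  have t0: "\<And>X \<eta> p z. z \<notin> cells X p \<Longrightarrow> ncomp X \<eta> (times1 \<alpha>) p z = undefined"
    by (simp add: ncomp_def)
  have DF: "\<And>p h. bmor (Suc m') p h \<Longrightarrow> bcomp m (dm m) (bcomp (Suc m) F h) = bcomp m f (bcomp m' (dm m') h)"
    by (simp add: bcomp_assoc[OF bmor_dm] bcomp_assoc[OF f] F_def dm_fp[OF f])
  have eqa: "ncomp (cube (Suc m') 2) (aA m) (times1 \<alpha>) = aA m'"
    apply (rule ext)+
    subgoal for p z
      by (cases "z \<in> cells (cube (Suc m') 2) p")
        (auto simp: t1 t0 \<alpha>app aA_def cube_simps bmor_bcomp[OF F])
    done
  have eqb: "ncomp (boxk (Suc m') 2 True) (bA \<gamma> m) (times1 \<alpha>) = bA \<gamma>' m'"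
  proof (rule ext, rule ext)
    fix p z
    show "ncomp (boxk (Suc m') 2 True) (bA \<gamma> m) (times1 \<alpha>) p z = bA \<gamma>' m' p z"
    proof (cases "z \<in> cells (boxk (Suc m') 2 True) p")
      case False then show ?thesis by (simp add: t0 bA_def)
    next
      case True
      have g1: "bmor (Suc m') p (fst z)" using True by (simp add: boxk_simps)
      have h2: "bmor 2 p (snd z)" using True by (auto simp: boxk_simps intro: obox_bmor)
      define V where "V = (if snd z 2 = Suc p then snd z 1 else 0)"
      have v: "V \<le> Suc p" using snd_le(1)[OF h2] by (simp add: V_def)
      have c: "(bcomp m' (dm m') (fst z), pt1 p V) \<in> cells (cube m' 1) p"
        using bmor_pt1[OF v] bmor_bcomp[OF bmor_dm g1] by (simp add: cube_simps)
      have bx: "(bcomp (Suc m) F (fst z), snd z) \<in> cells (boxk (Suc m) 2 True) p"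
        using True bmor_bcomp[OF F g1] by (simp add: boxk_simps)
      show ?thesis using True bx g'app[OF c] DF[OF g1]
        by (simp add: t1 \<alpha>app[OF g1] bA_def V_def)
    qed
  qed
  have kA: "kan_square A terminal (to_terminal A) 2 True (Suc m) (aA m) (bA \<gamma> m)" by (rule kanA[OF gN])
  have H': "HH \<gamma>' m' = ncomp (cube (Suc m') 2) (HH \<gamma> m) (times1 \<alpha>)"
    using ukf_unif[OF uA kA _ \<alpha>N] eqa eqb by (simp add: HH_def)
  have H'app: "\<And>q z. z \<in> cells (cube (Suc m') 2) q \<Longrightarrow> HH \<gamma>' m' q z = HH \<gamma> m q (bcomp (Suc m) F (fst z), snd z)"
  proof -
    fix q z assume z: "z \<in> cells (cube (Suc m') 2) q"
    have "bmor (Suc m') q (fst z)" using z by (simp add: cube_simps)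
    then show "HH \<gamma>' m' q z = HH \<gamma> m q (bcomp (Suc m) F (fst z), snd z)"
      using H' t1[OF z] \<alpha>app by simp
  qed
  have eqaB: "ncomp (cube (Suc m') 1) (aB (HH \<gamma> m) (Suc m)) (times1 \<alpha>) = aB (HH \<gamma>' m') (Suc m')"
  proof (rule ext, rule ext)
    fix p z
    show "ncomp (cube (Suc m') 1) (aB (HH \<gamma> m) (Suc m)) (times1 \<alpha>) p z = aB (HH \<gamma>' m') (Suc m') p z"
    proof (cases "z \<in> cells (cube (Suc m') 1) p")
      case False then show ?thesis by (simp add: t0 aB_def)
    next
      case True
      have g1: "bmor (Suc m') p (fst z)" using True by (simp add: cube_simps)
      have zc: "(bcomp (Suc m) F (fst z), snd z) \<in> cells (cube (Suc m) 1) p"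
        using True bmor_bcomp[OF F g1] by (simp add: cube_simps)
      show ?thesis
      proof (rule ext, rule ext)
        fix q w
        show "ncomp (cube (Suc m') 1) (aB (HH \<gamma> m) (Suc m)) (times1 \<alpha>) p z q w = aB (HH \<gamma>' m') (Suc m') p z q w"
        proof (cases "w \<in> cells (cube p 1) q")
          case False then show ?thesis using True zc by (simp add: t1 \<alpha>app[OF g1] aB_def)
        next
          case wc: True
          have w1: "bmor p q (fst w)" and w2: "bmor 1 q (snd w)" using wc by (auto simp: cube_simps)
          have u: "snd w 1 \<le> Suc q" using w2 by (rule snd_le)
          have h1: "snd z 1 \<le> Suc p" using True by (auto simp: cube_simps intro: snd_le)
          have v: "fst w (snd z 1) \<le> Suc q" using w1 h1 by (rule bmor_le)
          have cc: "(bcomp (Suc m') (fst z) (fst w), pt2 q (snd w 1) (fst w (snd z 1))) \<in> cells (cube (Suc m') 2) q"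
            using bmor_bcomp[OF g1 w1] bmor_pt2[OF u v] by (simp add: cube_simps)
          show ?thesis using True zc wc H'app[OF cc]
            by (simp add: t1 \<alpha>app[OF g1] aB_def bcomp_assoc[OF F])
        qed
      qed
    qed
  qed
  have eqbB: "ncomp (boxk (Suc m') 1 True) (bB b \<gamma> m) (times1 \<alpha>) = bB b \<gamma>' m'"
  proof (rule ext, rule ext)
    fix p z
    show "ncomp (boxk (Suc m') 1 True) (bB b \<gamma> m) (times1 \<alpha>) p z = bB b \<gamma>' m' p z"
    proof (cases "z \<in> cells (boxk (Suc m') 1 True) p")
      case False then show ?thesis by (simp add: t0 bB_def)
    next
      case True
      have g1: "bmor (Suc m') p (fst z)" using True by (simp add: boxk_simps)
      have c: "(bcomp m' (dm m') (fst z), pt1 p 0) \<in> cells (cube m' 1) p"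
        using bmor_bcomp[OF bmor_dm g1] by (simp add: cube_simps)
      have bx: "(bcomp (Suc m) F (fst z), snd z) \<in> cells (boxk (Suc m) 1 True) p"
        using True bmor_bcomp[OF F g1] by (simp add: boxk_simps)
      show ?thesis using True bx g'app[OF c] DF[OF g1]
        by (simp add: t1 \<alpha>app[OF g1] bB_def)
    qed
  qed
  have kB: "kan_square B (expo A) \<pi> 1 True (Suc m) (aB (HH \<gamma> m) (Suc m)) (bB b \<gamma> m)" by (rule kanB[OF gN])
  have L': "LL \<gamma>' m' = ncomp (cube (Suc m') 1) (LL \<gamma> m) (times1 \<alpha>)"
    using ukf_unif[OF uB kB _ \<alpha>N] eqaB eqbB by (simp add: LL_def)
  have pc: "(g0 m, pt1 m (Suc m)) \<in> cells (cube (Suc m) 1) m" by (simp add: cube_simps)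
  have pc': "(g0 m', pt1 m' (Suc m')) \<in> cells (cube (Suc m') 1) m'" by (simp add: cube_simps)
  have e1: "bcomp (Suc m) (g0 m) f = bcomp (Suc m) F (g0 m')" by (simp add: F_def g0_fp[OF f])
  have e2: "bcomp 1 (pt1 m (Suc m)) f = pt1 m' (Suc m')" using pt1_comp[OF f, of "Suc m"] bmorD(2)[OF f] by simp
  have "jj m' \<gamma>' = LL \<gamma> m m' (bcomp (Suc m) F (g0 m'), pt1 m' (Suc m'))"
    using g' L' t1[OF pc'] \<alpha>app[OF bmor_g0] by (simp add: jj_def)
  also have "\<dots> = LL \<gamma> m m' (act (cube (Suc m) 1) m m' f (g0 m, pt1 m (Suc m)))"
    by (simp add: cube_simps e1 e2)
  also have "\<dots> = act B m m' f (jj m \<gamma>)"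
    using ntD2[OF LN[OF gN] f pc] g by (simp add: jj_def)
  finally show ?thesis by (simp add: \<gamma>'_def)
qed

lemma jj_nt: "nat_trans (expo A) B jj"
proof (rule ntI)
  fix m \<gamma> assume g: "\<gamma> \<in> cells (expo A) m"
  have pc: "(g0 m, pt1 m (Suc m)) \<in> cells (cube (Suc m) 1) m" by (simp add: cube_simps)
  show "jj m \<gamma> \<in> cells B m" using g ntD1[OF LN pc] by (simp add: jj_def)
next
  fix n m f x assume "bmor n m f" "x \<in> cells (expo A) n"
  then show "jj m (act (expo A) n m f x) = act B n m f (jj n x)" by (rule jj_nat)
qed (simp add: jj_def)

end


theorem proposition3p13:
  fixes A :: "'a cset" and B :: "'b cset"
    and \<pi> :: "nat \<Rightarrow> 'b \<Rightarrow> (nat \<Rightarrow> bmap \<times> bmap \<Rightarrow> 'a)" and b :: "nat \<Rightarrow> 'a \<Rightarrow> 'b"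
  assumes "cubical A" and "cubical B"
    and "normal_uniform_kan_complex A"
    and "nat_trans B (expo A) \<pi>"
    and "normal_uniform_kan_fib B (expo A) \<pi>"
    and "nat_trans A B b"
    and "ncomp A \<pi> b = rmap A"
  shows "\<exists>j. nat_trans (expo A) B j \<and> ncomp (expo A) \<pi> j = nid (expo A) \<and> ncomp A j (rmap A) = b"
proof -
  obtain \<phi>A where uA: "uniform_kan_fib A terminal (to_terminal A) \<phi>A"
    and nA: "normal_filler A terminal (to_terminal A) \<phi>A"
    using assms(3) unfolding normal_uniform_kan_complex_def normal_uniform_kan_fib_def by blast
  obtain \<phi>B where uB: "uniform_kan_fib B (expo A) \<pi> \<phi>B" and nB: "normal_filler B (expo A) \<pi> \<phi>B"
    using assms(5) unfolding normal_uniform_kan_fib_def by blast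
  interpret S A B \<pi> b \<phi>A \<phi>B
    by (rule S.intro) (use assms uA nA uB nB in auto)
  have e1: "ncomp (expo A) \<pi> jj = nid (expo A)"
  proof (rule ext, rule ext)
    fix m \<gamma>
    show "ncomp (expo A) \<pi> jj m \<gamma> = nid (expo A) m \<gamma>"
      using jj_pi[of \<gamma> m] by (simp add: ncomp_def nid_def del: expo_simps)
  qed
  have e2: "ncomp A jj (rmap A) = b"
  proof (rule ext, rule ext)
    fix m x
    show "ncomp A jj (rmap A) m x = b m x"
      using jj_r[of x m] ntD3[OF assms(6), of x m] by (auto simp: ncomp_def)
  qed
  show ?thesis using jj_nt e1 e2 by blast
qed

end
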